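(* Assume $\Delta=0$. Let $\mathcal{O}'(K)$ be the subring of $K$ generated (as a ring with $1$) by $\alpha,\beta,\gamma,\alpha l,\beta m$. Then $N$, viewed as an additive subgroup of $K^2$, is an $\mathcal{O}'(K)$-module: for every $\zeta\in N$ and every $x\in\mathcal{O}'(K)$ one has $x\zeta\in N$ (scalar multiplication in $K^2$). In particular $N$ is stable under multiplication by $\theta:=-4+\alpha+\beta+\gamma+\alpha l$.
   Context: Setting. Let $p,q,r\ge 3$ be integers and $W=W(p,q,r)$ the Coxeter group with generators $s_1,s_2,s_3$ and relations $s_i^2=1$, $(s_1s_2)^p=(s_1s_3)^q=(s_2s_3)^r=1$. Let $\alpha=4\cos^2(\pi k_1/p)$, $\beta=4\cos^2(\pi k_2/q)$, $\gamma=4\cos^2(\pi k_3/r)$ with $\gcd(k_1,p)=\gcd(k_2,q)=\gcd(k_3,r)=1$ (so $0<\alpha,\beta,\gamma<4$), and let $l,m\in\mathbb{C}$ with $lm=\gamma$. Let $K\subset\mathbb{C}$ be a field containing $\alpha,\beta,\gamma,l,m$, and $M$ a $3$-dimensional $K$-vector space with basis $(a_1,a_2,a_3)$. The reflection representation $R:W\to GL(M)$ with parameters $(\alpha,\beta,\gamma;l,m)$ is defined by: for $x=\lambda_1a_1+\lambda_2a_2+\lambda_3a_3$, $R(s_1)x=x-(2\lambda_1-\alpha\lambda_2-\beta\lambda_3)a_1$, $R(s_2)x=x-(-\lambda_1+2\lambda_2-l\lambda_3)a_2$, $R(s_3)x=x-(-\lambda_1-m\lambda_2+2\lambda_3)a_3$.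 Put $G=R(W)$ and write $s_i$ for $R(s_i)$. Let $\Delta=8-2\alpha-2\beta-2\gamma-(\alpha l+\beta m)$; $R$ is reducible iff $\Delta=0$. Reducible setting. Assume $\Delta=0$. Put $b=(4-\gamma)a_1+(l+2)a_2+(m+2)a_3$; then the space of $G$-fixed vectors is $C_M(G)=Kb$ and $(b,a_2,a_3)$ is a basis of $M$. Let $N=N(G)$ be the subgroup of elements of $G$ acting trivially on $M/C_M(G)$. Each $\zeta\in N$ satisfies $\zeta(b)=b$, $\zeta(a_2)=a_2+\lambda b$, $\zeta(a_3)=a_3+\mu b$ for a unique $(\lambda,\mu)\in K^2$; the map $\zeta\mapsto(\lambda,\mu)$ is an injective group homomorphism $N\to (K^2,+)$, through which $N$ is identified with an additive subgroup of $K^2$ (and written additively). Put $c_1=(\alpha,\beta)$, $c_2=(-2,l)$, $c_3=(m,-2)\in K^2$ and, for $\zeta=(\lambda,\mu)\in K^2$, $\omega(\zeta)=-\frac{\lambda(l+2)+\mu(m+2)}{4-\gamma}$. *)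

theory Defs
  imports Complex_Main
begin

text \<open>The module M is K^3 with basis a1,a2,a3; we represent a vector by its coordinate
 triple (lambda1, lambda2, lambda3).  Everything is embedded in complex^3 (K is a subfield of C).\<close>

type_synonym vec3 = "complex \<times> complex \<times> complex"

definition vadd :: "vec3 \<Rightarrow> vec3 \<Rightarrow> vec3" where
  "vadd x y = (fst x + fst y, fst (snd x) + fst (snd y), snd (snd x) + snd (snd y))"

definition vsmul :: "complex \<Rightarrow> vec3 \<Rightarrow> vec3" where
  "vsmul c x = (c * fst x, c * fst (snd x), c * snd (snd x))"

definition a1 :: vec3 where "a1 = (1, 0, 0)"
definition a2 :: vec3 where "a2 = (0, 1, 0)"
definition a3 :: vec3 where "a3 = (0, 0, 1)"

definition refl1 :: "complex \<Rightarrow> complex \<Rightarrow> vec3 \<Rightarrow> vec3" where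
  "refl1 \<alpha> \<beta> x = (case x of (x1, x2, x3) \<Rightarrow> (x1 - (2*x1 - \<alpha>*x2 - \<beta>*x3), x2, x3))"

definition refl2 :: "complex \<Rightarrow> vec3 \<Rightarrow> vec3" where
  "refl2 l x = (case x of (x1, x2, x3) \<Rightarrow> (x1, x2 - (-x1 + 2*x2 - l*x3), x3))"

definition refl3 :: "complex \<Rightarrow> vec3 \<Rightarrow> vec3" where
  "refl3 m x = (case x of (x1, x2, x3) \<Rightarrow> (x1, x2, x3 - (-x1 - m*x2 + 2*x3)))"

text \<open>G = R(W): the group generated by the three reflections.  Since each generator
 is an involution, this is the closure of the identity under left composition with generators.\<close>
inductive_set reflG :: "complex \<Rightarrow> complex \<Rightarrow> complex \<Rightarrow> complex \<Rightarrow> (vec3 \<Rightarrow> vec3) set"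
  for \<alpha> \<beta> l m where
  id_in: "id \<in> reflG \<alpha> \<beta> l m"
| s1: "g \<in> reflG \<alpha> \<beta> l m \<Longrightarrow> refl1 \<alpha> \<beta> \<circ> g \<in> reflG \<alpha> \<beta> l m"
| s2: "g \<in> reflG \<alpha> \<beta> l m \<Longrightarrow> refl2 l \<circ> g \<in> reflG \<alpha> \<beta> l m"
| s3: "g \<in> reflG \<alpha> \<beta> l m \<Longrightarrow> refl3 m \<circ> g \<in> reflG \<alpha> \<beta> l m"

definition fixedG :: "complex \<Rightarrow> complex \<Rightarrow> complex \<Rightarrow> complex \<Rightarrow> vec3 set" where
  "fixedG \<alpha> \<beta> l m = {v. \<forall>g \<in> reflG \<alpha> \<beta> l m. g v = v}"

text \<open>N(G): elements of G acting trivially on M / C_M(G).\<close>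
definition NG :: "complex \<Rightarrow> complex \<Rightarrow> complex \<Rightarrow> complex \<Rightarrow> (vec3 \<Rightarrow> vec3) set" where
  "NG \<alpha> \<beta> l m = {g \<in> reflG \<alpha> \<beta> l m.
      \<forall>x. \<exists>c \<in> fixedG \<alpha> \<beta> l m. g x = vadd x c}"

definition bvec :: "complex \<Rightarrow> complex \<Rightarrow> complex \<Rightarrow> vec3" where
  "bvec \<gamma> l m = (4 - \<gamma>, l + 2, m + 2)"

definition Npairs :: "complex \<Rightarrow> complex \<Rightarrow> complex \<Rightarrow> complex \<Rightarrow> complex \<Rightarrow> (complex \<times> complex) set" where
  "Npairs \<alpha> \<beta> \<gamma> l m = {(lam, mu). \<exists>g \<in> NG \<alpha> \<beta> l m.
      g a2 = vadd a2 (vsmul lam (bvec \<gamma> l m)) \<and> g a3 = vadd a3 (vsmul mu (bvec \<gamma> l m))}"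

inductive_set Oprime :: "complex \<Rightarrow> complex \<Rightarrow> complex \<Rightarrow> complex \<Rightarrow> complex \<Rightarrow> complex set"
  for \<alpha> \<beta> \<gamma> l m where
  one: "1 \<in> Oprime \<alpha> \<beta> \<gamma> l m"
| gen_a: "\<alpha> \<in> Oprime \<alpha> \<beta> \<gamma> l m"
| gen_b: "\<beta> \<in> Oprime \<alpha> \<beta> \<gamma> l m"
| gen_c: "\<gamma> \<in> Oprime \<alpha> \<beta> \<gamma> l m"
| gen_al: "\<alpha> * l \<in> Oprime \<alpha> \<beta> \<gamma> l m"
| gen_bm: "\<beta> * m \<in> Oprime \<alpha> \<beta> \<gamma> l m"
| add: "x \<in> Oprime \<alpha> \<beta> \<gamma> l m \<Longrightarrow> y \<in> Oprime \<alpha> \<beta> \<gamma> l m \<Longrightarrow> x + y \<in> Oprime \<alpha> \<beta> \<gamma> l m"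
| neg: "x \<in> Oprime \<alpha> \<beta> \<gamma> l m \<Longrightarrow> - x \<in> Oprime \<alpha> \<beta> \<gamma> l m"
| mul: "x \<in> Oprime \<alpha> \<beta> \<gamma> l m \<Longrightarrow> y \<in> Oprime \<alpha> \<beta> \<gamma> l m \<Longrightarrow> x * y \<in> Oprime \<alpha> \<beta> \<gamma> l m"

end

theory Submission
  imports Defs
begin

definition lin :: "(vec3 \<Rightarrow> vec3) \<Rightarrow> bool" where
  "lin g \<longleftrightarrow> (\<forall>x y. g (vadd x y) = vadd (g x) (g y)) \<and> (\<forall>c x. g (vsmul c x) = vsmul c (g x))"

lemma lin_refl1: "lin (refl1 a b)"
  by (auto simp: lin_def refl1_def vadd_def vsmul_def split: prod.splits simp: algebra_simps)
lemma lin_refl2: "lin (refl2 l)"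
  by (auto simp: lin_def refl2_def vadd_def vsmul_def split: prod.splits simp: algebra_simps)
lemma lin_refl3: "lin (refl3 m)"
  by (auto simp: lin_def refl3_def vadd_def vsmul_def split: prod.splits simp: algebra_simps)

lemma lin_comp: "lin f \<Longrightarrow> lin g \<Longrightarrow> lin (f \<circ> g)"
  unfolding lin_def comp_def by metis

lemma reflG_lin: "g \<in> reflG a b l m \<Longrightarrow> lin g"
proof (induction rule: reflG.induct)
  case id_in then show ?case by (simp add: lin_def)
next
  case (s1 g) then show ?case using lin_comp lin_refl1 by blast
next
  case (s2 g) then show ?case using lin_comp lin_refl2 by blast
next
  case (s3 g) then show ?case using lin_comp lin_refl3 by blast
qed

lemma reflG_comp: "g \<in> reflG a b l m \<Longrightarrow> h \<in> reflG a b l m \<Longrightarrow> g \<circ> h \<in> reflG a b l m"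
proof (induction rule: reflG.induct)
  case id_in then show ?case by simp
next
  case (s1 g)
  have "refl1 a b \<circ> (g \<circ> h) \<in> reflG a b l m" by (rule reflG.s1) (rule s1.IH[OF s1.prems])
  then show ?case by (simp only: comp_assoc)
next
  case (s2 g)
  have "refl2 l \<circ> (g \<circ> h) \<in> reflG a b l m" by (rule reflG.s2) (rule s2.IH[OF s2.prems])
  then show ?case by (simp only: comp_assoc)
next
  case (s3 g)
  have "refl3 m \<circ> (g \<circ> h) \<in> reflG a b l m" by (rule reflG.s3) (rule s3.IH[OF s3.prems])
  then show ?case by (simp only: comp_assoc)
qed

lemma gen1: "refl1 a b \<in> reflG a b l m" using reflG.s1[OF reflG.id_in] by simp
lemma gen2: "refl2 l \<in> reflG a b l m" using reflG.s2[OF reflG.id_in] by simp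
lemma gen3: "refl3 m \<in> reflG a b l m" using reflG.s3[OF reflG.id_in] by simp

lemma refl1_inv: "refl1 a b (refl1 a b x) = x"
  by (auto simp: refl1_def split: prod.splits)
lemma refl2_inv: "refl2 l (refl2 l x) = x"
  by (auto simp: refl2_def split: prod.splits)
lemma refl3_inv: "refl3 m (refl3 m x) = x"
  by (auto simp: refl3_def split: prod.splits)

lemma reflG_inv: "g \<in> reflG a b l m \<Longrightarrow> \<exists>h \<in> reflG a b l m. \<forall>x. h (g x) = x"
proof (induction rule: reflG.induct)
  case id_in then show ?case by (intro bexI[of _ id] reflG.id_in) simp
next
  case (s1 g)
  then obtain h where h: "h \<in> reflG a b l m" "\<forall>x. h (g x) = x" by blast
  show ?case using reflG_comp[OF h(1) gen1] h(2) refl1_inv by (intro bexI[of _ "h \<circ> refl1 a b"]) auto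
next
  case (s2 g)
  then obtain h where h: "h \<in> reflG a b l m" "\<forall>x. h (g x) = x" by blast
  show ?case using reflG_comp[OF h(1) gen2] h(2) refl2_inv by (intro bexI[of _ "h \<circ> refl2 l"]) auto
next
  case (s3 g)
  then obtain h where h: "h \<in> reflG a b l m" "\<forall>x. h (g x) = x" by blast
  show ?case using reflG_comp[OF h(1) gen3] h(2) refl3_inv by (intro bexI[of _ "h \<circ> refl3 m"]) auto
qed

lemma lin_decomp: "lin g \<Longrightarrow> g v = vadd (vsmul (fst v) (g a1)) (vadd (vsmul (fst (snd v)) (g a2)) (vsmul (snd (snd v)) (g a3)))"
proof -
  assume "lin g"
  have "v = vadd (vsmul (fst v) a1) (vadd (vsmul (fst (snd v)) a2) (vsmul (snd (snd v)) a3))"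
    by (cases v) (auto simp: vadd_def vsmul_def a1_def a2_def a3_def)
  then have "g v = g (vadd (vsmul (fst v) a1) (vadd (vsmul (fst (snd v)) a2) (vsmul (snd (snd v)) a3)))" by simp
  also have "\<dots> = vadd (vsmul (fst v) (g a1)) (vadd (vsmul (fst (snd v)) (g a2)) (vsmul (snd (snd v)) (g a3)))"
    using \<open>lin g\<close> unfolding lin_def by metis
  finally show ?thesis .
qed

locale S =
  fixes \<alpha> \<beta> \<gamma> l m :: complex
  assumes lm: "l*m = \<gamma>" and D: "8 - 2*\<alpha> - 2*\<beta> - 2*\<gamma> - (\<alpha>*l + \<beta>*m) = 0" and g4: "\<gamma> \<noteq> 4"
begin

abbreviation bb where "bb \<equiv> bvec \<gamma> l m"
definition om where "om lam mu = -(lam*(l+2)+mu*(m+2))/(4-\<gamma>)"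
definition F where "F lam mu v = fst v * om lam mu + fst (snd v)*lam + snd (snd v)*mu"
definition P where "P g lam mu \<longleftrightarrow> g \<in> reflG \<alpha> \<beta> l m \<and> (\<forall>v. g v = vadd v (vsmul (F lam mu v) bb))"

lemma g4': "4 - \<gamma> \<noteq> 0" using g4 by simp

lemma F_b: "F lam mu bb = 0"
  using g4' by (simp add: F_def om_def bvec_def field_simps)

lemma r1b: "refl1 \<alpha> \<beta> bb = bb"
  using D by (simp add: refl1_def bvec_def algebra_simps)
lemma r2b: "refl2 l bb = bb"
  using lm by (simp add: refl2_def bvec_def algebra_simps)
lemma r3b: "refl3 m bb = bb"
  using lm by (simp add: refl3_def bvec_def algebra_simps)

lemma reflG_b: "g \<in> reflG \<alpha> \<beta> l m \<Longrightarrow> g bb = bb"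
  by (induction rule: reflG.induct) (simp_all add: r1b r2b r3b)

lemma fwd:
  assumes g: "g \<in> reflG \<alpha> \<beta> l m" and ga2: "g a2 = vadd a2 (vsmul lam bb)" and ga3: "g a3 = vadd a3 (vsmul mu bb)"
  shows "P g lam mu"
proof -
  have L: "lin g" using reflG_lin[OF g] .
  obtain p1 p2 p3 where p: "g a1 = (p1,p2,p3)" by (cases "g a1") auto
  have "bb = g bb" using reflG_b[OF g] by simp
  also have "\<dots> = vadd (vsmul (4-\<gamma>) (g a1)) (vadd (vsmul (l+2) (g a2)) (vsmul (m+2) (g a3)))"
    using lin_decomp[OF L, of bb] by (simp add: bvec_def)
  finally have e: "bb = vadd (vsmul (4-\<gamma>) (p1,p2,p3)) (vadd (vsmul (l+2) (vadd a2 (vsmul lam bb))) (vsmul (m+2) (vadd a3 (vsmul mu bb))))"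
    using p ga2 ga3 by simp
  have e1: "4 - \<gamma> = (4-\<gamma>)*p1 + ((l+2)*(lam*(4-\<gamma>)) + (m+2)*(mu*(4-\<gamma>)))"
    using arg_cong[OF e, of fst] by (simp add: vadd_def vsmul_def a2_def a3_def bvec_def)
  have e2: "l+2 = (4-\<gamma>)*p2 + (l+2)*(1 + lam*(l+2)) + (m+2)*(mu*(l+2))"
    using arg_cong[OF e, of "\<lambda>x. fst (snd x)"] by (simp add: vadd_def vsmul_def a2_def a3_def bvec_def add.assoc)
  have e3: "m+2 = (4-\<gamma>)*p3 + (l+2)*(lam*(m+2)) + (m+2)*(1 + mu*(m+2))"
    using arg_cong[OF e, of "\<lambda>x. snd (snd x)"] by (simp add: vadd_def vsmul_def a2_def a3_def bvec_def add.assoc)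
  have q1: "p1 = 1 + om lam mu * (4-\<gamma>)" using e1 g4' by (simp add: om_def field_simps; simp add: algebra_simps)
  have q2: "p2 = om lam mu * (l+2)" using e2 g4' by (simp add: om_def field_simps; simp add: algebra_simps)
  have q3: "p3 = om lam mu * (m+2)" using e3 g4' by (simp add: om_def field_simps; simp add: algebra_simps)
  have "\<forall>v. g v = vadd v (vsmul (F lam mu v) bb)"
  proof
    fix v
    show "g v = vadd v (vsmul (F lam mu v) bb)"
      using lin_decomp[OF L, of v] p ga2 ga3 q1 q2 q3
      by (cases v) (simp add: vadd_def vsmul_def a1_def a2_def a3_def bvec_def F_def algebra_simps)
  qed
  then show ?thesis using g by (simp add: P_def)
qed

abbreviation NN where "NN \<equiv> Npairs \<alpha> \<beta> \<gamma> l m"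

lemma Npairs_P: "(lam,mu) \<in> NN \<Longrightarrow> \<exists>g. P g lam mu"
  unfolding Npairs_def NG_def using fwd by blast

lemma smul_b_fixed: "vsmul t bb \<in> fixedG \<alpha> \<beta> l m"
proof -
  have "h (vsmul t bb) = vsmul t bb" if "h \<in> reflG \<alpha> \<beta> l m" for h
    using reflG_lin[OF that] reflG_b[OF that] unfolding lin_def by metis
  then show ?thesis by (simp add: fixedG_def)
qed

lemma P_Npairs: assumes "P g lam mu" shows "(lam,mu) \<in> NN"
proof -
  have g: "g \<in> reflG \<alpha> \<beta> l m" and f: "\<And>v. g v = vadd v (vsmul (F lam mu v) bb)" using assms by (auto simp: P_def)
  have "g \<in> NG \<alpha> \<beta> l m" unfolding NG_def using g f smul_b_fixed by blast
  moreover have "g a2 = vadd a2 (vsmul lam bb)" using f[of a2] by (simp add: F_def a2_def)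
  moreover have "g a3 = vadd a3 (vsmul mu bb)" using f[of a3] by (simp add: F_def a3_def)
  ultimately show ?thesis unfolding Npairs_def by blast
qed

lemma om_add: "om (a+b) (c+d) = om a c + om b d"
  by (simp add: om_def add_divide_distrib[symmetric] algebra_simps)
lemma om_smul: "om (t*a) (t*c) = t * om a c"
  by (simp add: om_def algebra_simps)
lemma om_neg: "om (-a) (-c) = - om a c"
  using g4' by (simp add: om_def field_simps)
lemma om_c1: "om (t*\<alpha>) (t*\<beta>) = -2*t"
proof -
  have "(t*\<alpha>)*(l+2)+(t*\<beta>)*(m+2) - (2*t)*(4-\<gamma>) = -t*(8 - 2*\<alpha> - 2*\<beta> - 2*\<gamma> - (\<alpha>*l + \<beta>*m))"
    by (simp add: algebra_simps)
  then have "(t*\<alpha>)*(l+2)+(t*\<beta>)*(m+2) = (2*t)*(4-\<gamma>)" using D by simp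
  then show ?thesis using g4' by (simp add: om_def)
qed
lemma om_c2: "om (-2*t) (l*t) = t"
  using g4' lm by (simp add: om_def field_simps; simp add: algebra_simps)
lemma om_c3: "om (m*t) (-2*t) = t"
  using g4' lm by (simp add: om_def field_simps; simp add: algebra_simps)

lemma F_shift: "F lam mu (vadd v (vsmul t bb)) = F lam mu v"
proof -
  have "F lam mu (vadd v (vsmul t bb)) = F lam mu v + t * F lam mu bb"
    by (simp add: F_def vadd_def vsmul_def bvec_def algebra_simps)
  then show ?thesis by (simp add: F_b)
qed

lemma P_add: assumes "P g l1 m1" "P h l2 m2" shows "P (g \<circ> h) (l1+l2) (m1+m2)"
proof -
  have g: "g \<in> reflG \<alpha> \<beta> l m" and fg: "\<And>v. g v = vadd v (vsmul (F l1 m1 v) bb)" using assms by (auto simp: P_def)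
  have h: "h \<in> reflG \<alpha> \<beta> l m" and fh: "\<And>v. h v = vadd v (vsmul (F l2 m2 v) bb)" using assms by (auto simp: P_def)
  have "(g \<circ> h) v = vadd v (vsmul (F (l1+l2) (m1+m2) v) bb)" for v
  proof -
    have "(g \<circ> h) v = vadd (vadd v (vsmul (F l2 m2 v) bb)) (vsmul (F l1 m1 v) bb)"
      using fg fh F_shift by simp
    then show ?thesis by (simp add: F_def om_add vadd_def vsmul_def algebra_simps)
  qed
  then show ?thesis using reflG_comp[OF g h] by (simp add: P_def)
qed

lemma P_neg: assumes "P g lam mu" shows "\<exists>h. P h (-lam) (-mu)"
proof -
  have g: "g \<in> reflG \<alpha> \<beta> l m" and fg: "\<And>v. g v = vadd v (vsmul (F lam mu v) bb)" using assms by (auto simp: P_def)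
  obtain h where h: "h \<in> reflG \<alpha> \<beta> l m" "\<And>x. h (g x) = x" using reflG_inv[OF g] by blast
  have "h v = vadd v (vsmul (F (-lam) (-mu) v) bb)" for v
  proof -
    define w where "w = vadd v (vsmul (- F lam mu v) bb)"
    have "g w = vadd w (vsmul (F lam mu v) bb)" using fg[of w] F_shift by (simp add: w_def)
    also have "\<dots> = v" by (cases v) (simp add: w_def vadd_def vsmul_def)
    finally have "h v = w" using h(2)[of w] by simp
    then show ?thesis by (simp add: w_def F_def om_neg)
  qed
  then show ?thesis using h(1) by (auto simp: P_def)
qed

lemma refl1_vadd_b: "refl1 \<alpha> \<beta> (vadd x (vsmul t bb)) = vadd (refl1 \<alpha> \<beta> x) (vsmul t bb)"
  using lin_refl1[of \<alpha> \<beta>] r1b unfolding lin_def by metis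
lemma refl2_vadd_b: "refl2 l (vadd x (vsmul t bb)) = vadd (refl2 l x) (vsmul t bb)"
  using lin_refl2[of l] r2b unfolding lin_def by metis
lemma refl3_vadd_b: "refl3 m (vadd x (vsmul t bb)) = vadd (refl3 m x) (vsmul t bb)"
  using lin_refl3[of m] r3b unfolding lin_def by metis

lemma P_conj1: assumes "P g lam mu"
  shows "P (refl1 \<alpha> \<beta> \<circ> g \<circ> refl1 \<alpha> \<beta>) (lam + om lam mu * \<alpha>) (mu + om lam mu * \<beta>)"
proof -
  have g: "g \<in> reflG \<alpha> \<beta> l m" and fg: "\<And>v. g v = vadd v (vsmul (F lam mu v) bb)" using assms by (auto simp: P_def)
  have om': "om (lam + om lam mu * \<alpha>) (mu + om lam mu * \<beta>) = - om lam mu"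
    using om_add[of lam "om lam mu * \<alpha>" mu "om lam mu * \<beta>"] om_c1[of "om lam mu"] by (simp add: mult.commute)
  have "(refl1 \<alpha> \<beta> \<circ> g \<circ> refl1 \<alpha> \<beta>) v = vadd v (vsmul (F (lam + om lam mu * \<alpha>) (mu + om lam mu * \<beta>) v) bb)" for v
    using fg refl1_vadd_b refl1_inv
    unfolding F_def om' by (cases v) (simp add: refl1_def algebra_simps)
  moreover have "refl1 \<alpha> \<beta> \<circ> g \<circ> refl1 \<alpha> \<beta> \<in> reflG \<alpha> \<beta> l m"
    using reflG_comp[OF reflG_comp[OF gen1 g] gen1] .
  ultimately show ?thesis by (simp add: P_def)
qed

lemma P_conj2: assumes "P g lam mu"
  shows "P (refl2 l \<circ> g \<circ> refl2 l) (lam + lam * (-2)) (mu + lam * l)"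
proof -
  have g: "g \<in> reflG \<alpha> \<beta> l m" and fg: "\<And>v. g v = vadd v (vsmul (F lam mu v) bb)" using assms by (auto simp: P_def)
  have om': "om (lam + lam * (-2)) (mu + lam * l) = om lam mu + lam"
    using om_add[of lam "-2*lam" mu "l*lam"] om_c2[of lam] by (simp add: mult.commute)
  have "(refl2 l \<circ> g \<circ> refl2 l) v = vadd v (vsmul (F (lam + lam * (-2)) (mu + lam * l) v) bb)" for v
    using fg refl2_vadd_b refl2_inv
    unfolding F_def om' by (cases v) (simp add: refl2_def algebra_simps)
  moreover have "refl2 l \<circ> g \<circ> refl2 l \<in> reflG \<alpha> \<beta> l m"
    using reflG_comp[OF reflG_comp[OF gen2 g] gen2] .
  ultimately show ?thesis by (simp add: P_def)
qed

lemma P_conj3: assumes "P g lam mu"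
  shows "P (refl3 m \<circ> g \<circ> refl3 m) (lam + mu * m) (mu + mu * (-2))"
proof -
  have g: "g \<in> reflG \<alpha> \<beta> l m" and fg: "\<And>v. g v = vadd v (vsmul (F lam mu v) bb)" using assms by (auto simp: P_def)
  have om': "om (lam + mu * m) (mu + mu * (-2)) = om lam mu + mu"
    using om_add[of lam "m*mu" mu "-2*mu"] om_c3[of mu] by (simp add: mult.commute)
  have "(refl3 m \<circ> g \<circ> refl3 m) v = vadd v (vsmul (F (lam + mu * m) (mu + mu * (-2)) v) bb)" for v
    using fg refl3_vadd_b refl3_inv
    unfolding F_def om' by (cases v) (simp add: refl3_def algebra_simps)
  moreover have "refl3 m \<circ> g \<circ> refl3 m \<in> reflG \<alpha> \<beta> l m"
    using reflG_comp[OF reflG_comp[OF gen3 g] gen3] .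
  ultimately show ?thesis by (simp add: P_def)
qed

lemma N_add: "(a,b) \<in> NN \<Longrightarrow> (c,d) \<in> NN \<Longrightarrow> (a+c, b+d) \<in> NN"
proof -
  assume "(a,b) \<in> NN" "(c,d) \<in> NN"
  then obtain g h where "P g a b" "P h c d" using Npairs_P by metis
  then show ?thesis using P_add P_Npairs by blast
qed
lemma N_neg: "(a,b) \<in> NN \<Longrightarrow> (-a, -b) \<in> NN"
proof -
  assume "(a,b) \<in> NN"
  then obtain g where "P g a b" using Npairs_P by metis
  then obtain h where "P h (-a) (-b)" using P_neg by metis
  then show ?thesis using P_Npairs by blast
qed
lemma N_eq: "(a,b) \<in> NN \<Longrightarrow> a = c \<Longrightarrow> b = d \<Longrightarrow> (c,d) \<in> NN" by simp
lemma N_A1: "(a,b) \<in> NN \<Longrightarrow> (om a b * \<alpha>, om a b * \<beta>) \<in> NN"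
proof -
  assume z: "(a,b) \<in> NN"
  then obtain g where "P g a b" using Npairs_P by blast
  then have "(a + om a b * \<alpha>, b + om a b * \<beta>) \<in> NN" using P_conj1 P_Npairs by blast
  from N_add[OF this N_neg[OF z]] show ?thesis by simp
qed
lemma N_A2: "(a,b) \<in> NN \<Longrightarrow> (-2*a, l*a) \<in> NN"
proof -
  assume z: "(a,b) \<in> NN"
  then obtain g where "P g a b" using Npairs_P by blast
  then have "(a + a * (-2), b + a * l) \<in> NN" using P_conj2 P_Npairs by blast
  from N_add[OF this N_neg[OF z]] show ?thesis by (simp add: mult.commute)
qed
lemma N_A3: "(a,b) \<in> NN \<Longrightarrow> (m*b, -2*b) \<in> NN"
proof -
  assume z: "(a,b) \<in> NN"
  then obtain g where "P g a b" using Npairs_P by blast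
  then have "(a + b * m, b + b * (-2)) \<in> NN" using P_conj3 P_Npairs by blast
  from N_add[OF this N_neg[OF z]] show ?thesis by (simp add: mult.commute)
qed
lemma N_nat: "(a,b) \<in> NN \<Longrightarrow> (of_nat k * a, of_nat k * b) \<in> NN"
proof (induction k)
  case 0
  from N_add[OF 0 N_neg[OF 0]] show ?case by simp
next
  case (Suc k)
  from N_add[OF Suc.IH[OF Suc.prems] Suc.prems] show ?case by (simp add: algebra_simps)
qed
lemma N_int: "(a,b) \<in> NN \<Longrightarrow> (of_int k * a, of_int k * b) \<in> NN"
proof (cases "k \<ge> 0")
  case True
  assume z: "(a,b) \<in> NN"
  from N_nat[OF z, of "nat k"] True show ?thesis by simp
next
  case False
  assume z: "(a,b) \<in> NN"
  from N_neg[OF N_nat[OF z, of "nat (-k)"]] False show ?thesis by simp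
qed
lemma N_lc: "(a,b) \<in> NN \<Longrightarrow> (c,d) \<in> NN \<Longrightarrow> (of_int i*a + of_int j*c, of_int i*b + of_int j*d) \<in> NN"
  using N_add N_int by blast

lemma N_A1c2: "(-2*t, l*t) \<in> NN \<Longrightarrow> (t*\<alpha>, t*\<beta>) \<in> NN"
  using N_A1[of "-2*t" "l*t"] om_c2 by simp
lemma N_A1c3: "(m*t, -2*t) \<in> NN \<Longrightarrow> (t*\<alpha>, t*\<beta>) \<in> NN"
  using N_A1[of "m*t" "-2*t"] om_c3 by simp
lemma om_rel: "om a b * (4-\<gamma>) = -(a*(l+2)+b*(m+2))"
  using g4' by (simp add: om_def)
lemma canc: "(4-\<gamma>)*x = (4-\<gamma>)*y \<Longrightarrow> x = y"
  using g4' by simp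

lemma gen_gamma: assumes z: "(a,b) \<in> NN" shows "(\<gamma>*a, \<gamma>*b) \<in> NN"
proof -
  note z2 = N_A2[OF z] and z3 = N_A3[OF z]
  note z32 = N_A3[OF z2] and z23 = N_A2[OF z3]
  from N_lc[OF N_lc[OF N_lc[OF N_lc[OF z z2, of 4 2] z3, of 1 2] z32, of 1 1] z23, of 1 1]
  show ?thesis by (rule N_eq; use lm in \<open>simp add: algebra_simps\<close>)
qed

lemma gen_alpha: assumes z: "(a,b) \<in> NN" shows "(\<alpha>*a, \<alpha>*b) \<in> NN"
proof -
  note z1 = N_A1[OF z] and z2 = N_A2[OF z]
  note z21 = N_A2[OF z1] and z12 = N_A1c2[OF z2]
  have r: "om a b * (4-\<gamma>) = -(a*(l+2)+b*(m+2))" by (rule om_rel)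
  from N_lc[OF N_lc[OF N_lc[OF N_lc[OF z z1, of 4 2] z2, of 1 2] z21, of 1 1] z12, of 1 1]
  show ?thesis
    apply (rule N_eq)
     apply (simp add: algebra_simps)
    apply (rule canc)
    apply simp
    using r D lm apply algebra
    done
qed

lemma gen_beta: assumes z: "(a,b) \<in> NN" shows "(\<beta>*a, \<beta>*b) \<in> NN"
proof -
  note z1 = N_A1[OF z] and z3 = N_A3[OF z]
  note z31 = N_A3[OF z1] and z13 = N_A1c3[OF z3]
  have r: "om a b * (4-\<gamma>) = -(a*(l+2)+b*(m+2))" by (rule om_rel)
  from N_lc[OF N_lc[OF N_lc[OF N_lc[OF z z1, of 4 2] z3, of 1 2] z31, of 1 1] z13, of 1 1]
  show ?thesis
    apply (rule N_eq)
    subgoal by (rule canc) (simp; insert r D lm; algebra)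
    subgoal by (rule canc) (simp; insert r D lm; algebra)
    done
qed

lemma N_gen_al: assumes z: "(a,b) \<in> NN" shows "((\<alpha>*l)*a, (\<alpha>*l)*b) \<in> NN"
proof -
  note z1 = N_A1[OF z] and z2 = N_A2[OF z] and z3 = N_A3[OF z]
  note z21 = N_A2[OF z1] and z31 = N_A3[OF z1] and z23 = N_A2[OF z3]
  note z231 = N_A2[OF z31] and z132 = N_A1c3[OF N_A3[OF z2]]
  have r: "om a b * (4-\<gamma>) = -(a*(l+2)+b*(m+2))" by (rule om_rel)
  from N_lc[OF N_lc[OF N_lc[OF N_lc[OF N_lc[OF N_lc[OF N_lc[OF N_lc[OF z z1, of "-8" "-4"] z2, of 1 "-4"] z3, of 1 "-4"] z21, of 1 "-2"] z31, of 1 "-2"] z23, of 1 "-2"] z231, of 1 "-1"] z132, of 1 1]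
  show ?thesis
    apply (rule N_eq)
    subgoal by (rule canc) (simp; insert r D lm; algebra)
    subgoal by (rule canc) (simp; insert r D lm; algebra)
    done
qed

lemma N_gen_bm: assumes z: "(a,b) \<in> NN" shows "((\<beta>*m)*a, (\<beta>*m)*b) \<in> NN"
proof -
  note z1 = N_A1[OF z] and z2 = N_A2[OF z] and z3 = N_A3[OF z]
  note z12 = N_A1c2[OF z2] and z32 = N_A3[OF z2] and z13 = N_A1c3[OF z3]
  note z231 = N_A2[OF N_A3[OF z1]] and z132 = N_A1c3[OF N_A3[OF z2]]
  have r: "om a b * (4-\<gamma>) = -(a*(l+2)+b*(m+2))" by (rule om_rel)
  from N_lc[OF N_lc[OF N_lc[OF N_lc[OF N_lc[OF N_lc[OF N_lc[OF N_lc[OF z z1, of "-8" "-4"] z2, of 1 "-4"] z3, of 1 "-4"] z12, of 1 "-2"] z32, of 1 "-2"] z13, of 1 "-2"] z231, of 1 1] z132, of 1 "-1"]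
  show ?thesis
    apply (rule N_eq)
    subgoal by (rule canc) (simp; insert r D lm; algebra)
    subgoal by (rule canc) (simp; insert r D lm; algebra)
    done
qed

lemma Oprime_closed: "x \<in> Oprime \<alpha> \<beta> \<gamma> l m \<Longrightarrow> (a,b) \<in> NN \<Longrightarrow> (x*a, x*b) \<in> NN"
proof (induction arbitrary: a b rule: Oprime.induct)
  case one then show ?case by simp
next
  case gen_a then show ?case by (rule gen_alpha)
next
  case gen_b then show ?case by (rule gen_beta)
next
  case gen_c then show ?case by (rule gen_gamma)
next
  case gen_al then show ?case by (rule N_gen_al)
next
  case gen_bm then show ?case by (rule N_gen_bm)
next
  case (add x y) then show ?case using N_add[OF add.IH(1)[OF add.prems] add.IH(2)[OF add.prems]]
    by (simp add: distrib_right)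
next
  case (neg x) then show ?case using N_neg[OF neg.IH[OF neg.prems]] by simp
next
  case (mul x y) then show ?case using mul.IH(1)[OF mul.IH(2)[OF mul.prems]] by (simp add: mult.assoc)
qed

lemma theta_in: "-4 + \<alpha> + \<beta> + \<gamma> + \<alpha>*l \<in> Oprime \<alpha> \<beta> \<gamma> l m"
proof -
  have o: "1 \<in> Oprime \<alpha> \<beta> \<gamma> l m" by (rule Oprime.one)
  have "1+1+1+1 \<in> Oprime \<alpha> \<beta> \<gamma> l m" by (intro Oprime.add o)
  then have "-(1+1+1+1) \<in> Oprime \<alpha> \<beta> \<gamma> l m" by (rule Oprime.neg)
  then have "-(1+1+1+1) + \<alpha> + \<beta> + \<gamma> + \<alpha>*l \<in> Oprime \<alpha> \<beta> \<gamma> l m"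
    by (intro Oprime.add Oprime.gen_a Oprime.gen_b Oprime.gen_c Oprime.gen_al)
  then show ?thesis by simp
qed

end

lemma gamma_ne4:
  fixes k3 r :: nat
  assumes "r \<ge> 3" "coprime k3 r" "\<gamma> = complex_of_real (4 * (cos (pi * real k3 / real r))\<^sup>2)"
  shows "\<gamma> \<noteq> 4"
proof
  assume "\<gamma> = 4"
  then have "4 * (cos (pi * real k3 / real r))\<^sup>2 = 4" using assms(3)
    by (metis of_real_eq_iff of_real_numeral)
  then have "(cos (pi * real k3 / real r))\<^sup>2 = 1" by simp
  then have "(sin (pi * real k3 / real r))\<^sup>2 = 0" using sin_cos_squared_add[of "pi * real k3 / real r"] by simp
  then have "sin (pi * real k3 / real r) = 0" by simp
  then obtain i :: int where i: "pi * real k3 / real r = of_int i * pi" using sin_zero_iff_int2 by blast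
  have rpos: "real r > 0" using assms(1) by simp
  from i have "real k3 = of_int i * real r" using rpos by (simp add: field_simps)
  then have "int k3 = i * int r" by (metis of_int_eq_iff of_int_mult of_int_of_nat_eq)
  then have "int r dvd int k3" by simp
  then have "r dvd k3" by simp
  then have "r dvd 1" using assms(2) by (metis coprime_common_divisor_nat dvd_refl)
  then show False using assms(1) by simp
qed

theorem theorem1:
  fixes p q r k1 k2 k3 :: nat and \<alpha> \<beta> \<gamma> l m :: complex and K :: "complex set"
  assumes "p \<ge> 3" "q \<ge> 3" "r \<ge> 3"
    and "coprime k1 p" "coprime k2 q" "coprime k3 r"
    and "\<alpha> = complex_of_real (4 * (cos (pi * real k1 / real p))\<^sup>2)"
    and "\<beta> = complex_of_real (4 * (cos (pi * real k2 / real q))\<^sup>2)"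
    and "\<gamma> = complex_of_real (4 * (cos (pi * real k3 / real r))\<^sup>2)"
    and "l * m = \<gamma>"
    and "0 \<in> K" "1 \<in> K" "\<And>x y. x \<in> K \<Longrightarrow> y \<in> K \<Longrightarrow> x + y \<in> K"
    and "\<And>x. x \<in> K \<Longrightarrow> - x \<in> K" "\<And>x y. x \<in> K \<Longrightarrow> y \<in> K \<Longrightarrow> x * y \<in> K"
    and "\<And>x. x \<in> K \<Longrightarrow> x \<noteq> 0 \<Longrightarrow> inverse x \<in> K"
    and "\<alpha> \<in> K" "\<beta> \<in> K" "\<gamma> \<in> K" "l \<in> K" "m \<in> K"
    and "8 - 2*\<alpha> - 2*\<beta> - 2*\<gamma> - (\<alpha>*l + \<beta>*m) = 0"
  shows "(\<forall>\<zeta> \<in> Npairs \<alpha> \<beta> \<gamma> l m. \<forall>x \<in> Oprime \<alpha> \<beta> \<gamma> l m.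
            (x * fst \<zeta>, x * snd \<zeta>) \<in> Npairs \<alpha> \<beta> \<gamma> l m)
       \<and> (\<forall>\<zeta> \<in> Npairs \<alpha> \<beta> \<gamma> l m.
            let \<theta> = -4 + \<alpha> + \<beta> + \<gamma> + \<alpha>*l in (\<theta> * fst \<zeta>, \<theta> * snd \<zeta>) \<in> Npairs \<alpha> \<beta> \<gamma> l m)"
proof -
  have g4: "\<gamma> \<noteq> 4" using gamma_ne4 assms(3,6,9) by blast
  interpret S \<alpha> \<beta> \<gamma> l m using assms(10,22) g4 by unfold_locales auto
  have A: "\<forall>\<zeta> \<in> Npairs \<alpha> \<beta> \<gamma> l m. \<forall>x \<in> Oprime \<alpha> \<beta> \<gamma> l m.
            (x * fst \<zeta>, x * snd \<zeta>) \<in> Npairs \<alpha> \<beta> \<gamma> l m"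
    using Oprime_closed by auto
  show ?thesis
    using A theta_in by (auto simp: Let_def)
qed

end
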